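(* Let $S\subseteq\mathcal S_d$ be nonempty, $[d]$ partitioned into groups $G_1,\dots,G_g$, $\bar\alpha,\bar\beta\in[0,1]^g$, $k\in[d]$, and assume the set $\mathcal F$ of $(\bar\alpha,\bar\beta)$-$k$-fair rankings in $\mathcal S_d$ is nonempty. Let $\tau$ be an $(\bar\alpha,\bar\beta)$-$k$-fair top-$k$ ranking minimizing $2\sum_{\pi\in S}\sum_{i\in D_\tau}(\pi(i)-\tau(i))\mathbb{1}[\tau(i)<\pi(i)]$, and let $\sigma\in\mathcal S_d$ be a ranking with $\sigma(a)=\tau(a)$ for all $a\in D_\tau$ minimizing $2\sum_{\pi\in S}\sum_{i\in[d]}(\pi(i)-\sigma(i))\mathbb{1}[\sigma(i)<\pi(i)]$ among such extensions. Then $\sigma\in\mathcal F$ and $\sum_{\pi\in S}\kappa(\pi,\sigma)\le 4\min_{\sigma'\in\mathcal F}\sum_{\pi\in S}\kappa(\pi,\sigma')$.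
   Context: $\mathcal{S}_d$ is the set of rankings of $[d]$, $\pi(a)$ the rank of $a$. A top-$k$ ranking is a bijection $\tau:D_\tau\to[k]$, $D_\tau\subseteq[d]$. A full or top-$k$ ranking is $(\bar\alpha,\bar\beta)$-$k$-fair if for every $i\in[g]$ its top $k$ positions contain at least $\lfloor\alpha_i k\rfloor$ and at most $\lceil\beta_i k\rceil$ members of $G_i$. $\kappa(\pi,\sigma)$ is the Kendall-tau distance: the number of unordered pairs $\{a,b\}$ ordered differently by $\pi$ and $\sigma$. $\mathbb{1}[\cdot]$ is the indicator function. *)

theory Defs
  imports Complex_Main "HOL-Combinatorics.Permutations"
begin

text \<open>Full rankings of [d] = {1..d}: permutations of {1..d} (identity outside);
  \<pi> a is the rank of item a.\<close>
definition rankings :: "nat \<Rightarrow> (nat \<Rightarrow> nat) set" where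
  "rankings d = {\<pi>. \<pi> permutes {1..d}}"

definition is_topk :: "nat \<Rightarrow> nat \<Rightarrow> nat set \<Rightarrow> (nat \<Rightarrow> nat) \<Rightarrow> bool" where
  "is_topk d k D \<tau> \<longleftrightarrow> D \<subseteq> {1..d} \<and> bij_betw \<tau> D {1..k}"

definition is_partition :: "nat \<Rightarrow> nat \<Rightarrow> (nat \<Rightarrow> nat set) \<Rightarrow> bool" where
  "is_partition d g G \<longleftrightarrow>
     (\<Union>i\<in>{1..g}. G i) = {1..d} \<and>
     (\<forall>i\<in>{1..g}. \<forall>j\<in>{1..g}. i \<noteq> j \<longrightarrow> G i \<inter> G j = {})"

definition fair_full ::
  "nat \<Rightarrow> (nat \<Rightarrow> nat set) \<Rightarrow> (nat \<Rightarrow> real) \<Rightarrow> (nat \<Rightarrow> real) \<Rightarrow> nat \<Rightarrow> (nat \<Rightarrow> nat) \<Rightarrow> bool" where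
  "fair_full g G \<alpha> \<beta> k \<pi> \<longleftrightarrow>
     (\<forall>i\<in>{1..g}. let c = card {a\<in>G i. \<pi> a \<le> k} in
        \<lfloor>\<alpha> i * real k\<rfloor> \<le> int c \<and> int c \<le> \<lceil>\<beta> i * real k\<rceil>)"

definition fair_topk ::
  "nat \<Rightarrow> (nat \<Rightarrow> nat set) \<Rightarrow> (nat \<Rightarrow> real) \<Rightarrow> (nat \<Rightarrow> real) \<Rightarrow> nat \<Rightarrow> nat set \<Rightarrow> (nat \<Rightarrow> nat) \<Rightarrow> bool" where
  "fair_topk g G \<alpha> \<beta> k D \<tau> \<longleftrightarrow>
     (\<forall>i\<in>{1..g}. let c = card {a\<in>G i \<inter> D. \<tau> a \<le> k} in
        \<lfloor>\<alpha> i * real k\<rfloor> \<le> int c \<and> int c \<le> \<lceil>\<beta> i * real k\<rceil>)"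

definition kendall_tau :: "nat \<Rightarrow> (nat \<Rightarrow> nat) \<Rightarrow> (nat \<Rightarrow> nat) \<Rightarrow> nat" where
  "kendall_tau d \<pi> \<sigma> = card {(a, b). a \<in> {1..d} \<and> b \<in> {1..d} \<and> a < b \<and>
                                 ((\<pi> a < \<pi> b) \<noteq> (\<sigma> a < \<sigma> b))}"

definition cost :: "(nat \<Rightarrow> nat) set \<Rightarrow> nat set \<Rightarrow> (nat \<Rightarrow> nat) \<Rightarrow> int" where
  "cost S D \<tau> = 2 * (\<Sum>\<pi>\<in>S. \<Sum>i\<in>D.
       (int (\<pi> i) - int (\<tau> i)) * (if \<tau> i < \<pi> i then 1 else 0))"

end

theory Submission
  imports Defs
begin


lemma rank_range:
  assumes "p permutes {1..d::nat}" "x \<in> {1..d}"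
  shows "p x \<in> {1..d}"
  using permutes_in_image[OF assms(1)] assms(2) by simp

lemma card_below:
  assumes p: "p permutes {1..d::nat}" and x: "x \<in> {1..d}"
  shows "card {b\<in>{1..d}. p b < p x} = p x - 1"
proof -
  have inj: "inj_on p {b\<in>{1..d}. p b < p x}"
    by (rule inj_on_subset[OF permutes_inj[OF p]]) simp
  have px: "p x \<in> {1..d}" using rank_range[OF p x] .
  have img: "p ` {b\<in>{1..d}. p b < p x} = {1..<p x}"
  proof
    show "p ` {b\<in>{1..d}. p b < p x} \<subseteq> {1..<p x}" using rank_range[OF p] by auto
    show "{1..<p x} \<subseteq> p ` {b\<in>{1..d}. p b < p x}"
    proof
      fix v assume v: "v \<in> {1..<p x}"
      then have "v \<in> {1..d}" using px by auto
      then obtain b where "b \<in> {1..d}" "p b = v" using permutes_image[OF p] by (metis imageE)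
      then show "v \<in> p ` {b\<in>{1..d}. p b < p x}" using v by auto
    qed
  qed
  have "card {b\<in>{1..d}. p b < p x} = card (p ` {b\<in>{1..d}. p b < p x})"
    using card_image[OF inj] by simp
  also have "\<dots> = p x - 1" using img by simp
  finally show ?thesis .
qed

lemma card_atmost:
  assumes p: "p permutes {1..d::nat}" and x: "x \<in> {1..d}"
  shows "card {b\<in>{1..d}. p b \<le> p x} = p x"
proof -
  have "{b\<in>{1..d}. p b \<le> p x} = insert x {b\<in>{1..d}. p b < p x}"
  proof
    show "{b\<in>{1..d}. p b \<le> p x} \<subseteq> insert x {b\<in>{1..d}. p b < p x}"
    proof
      fix b assume b: "b \<in> {b\<in>{1..d}. p b \<le> p x}"
      show "b \<in> insert x {b\<in>{1..d}. p b < p x}"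
      proof (cases "b = x")
        case False
        then have "p b \<noteq> p x" using permutes_inj[OF p] by (auto simp: inj_eq)
        then show ?thesis using b by auto
      qed simp
    qed
  qed (use x in auto)
  then have "card {b\<in>{1..d}. p b \<le> p x} = Suc (card {b\<in>{1..d}. p b < p x})"
    by simp
  then show ?thesis using card_below[OF p x] rank_range[OF p x] by simp
qed

definition discP :: "nat \<Rightarrow> (nat\<Rightarrow>nat) \<Rightarrow> (nat\<Rightarrow>nat) \<Rightarrow> (nat\<times>nat) set" where
 "discP d \<pi> \<sigma> = {(a,b). a\<in>{1..d} \<and> b\<in>{1..d} \<and> \<sigma> a < \<sigma> b \<and> \<pi> b < \<pi> a}"

definition discR :: "nat \<Rightarrow> (nat\<Rightarrow>nat) \<Rightarrow> (nat\<Rightarrow>nat) \<Rightarrow> (nat\<times>nat) set" where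
 "discR d \<pi> \<sigma> = {(a,b). a\<in>{1..d} \<and> b\<in>{1..d} \<and> a \<noteq> b \<and> ((\<pi> a < \<pi> b) \<noteq> (\<sigma> a < \<sigma> b))}"

lemma kt_eq:
  assumes p: "\<pi> permutes {1..d}" and s: "\<sigma> permutes {1..d}"
  shows "kendall_tau d \<pi> \<sigma> = card (discP d \<pi> \<sigma>)"
    and "card (discR d \<pi> \<sigma>) = 2 * kendall_tau d \<pi> \<sigma>"
proof -
  have ip: "inj \<pi>" and isg: "inj \<sigma>" using permutes_inj p s by auto
  define P where "P = {(a, b). a \<in> {1..d} \<and> b \<in> {1..d} \<and> a < b \<and>
                                 ((\<pi> a < \<pi> b) \<noteq> (\<sigma> a < \<sigma> b))}"
  define Q where "Q = discP d \<pi> \<sigma>"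
  define sw where "sw = (\<lambda>(a::nat,b::nat). (b,a))"
  have swi: "inj_on sw X" for X unfolding sw_def inj_on_def by auto
  have fin: "finite X" if "X \<subseteq> {1..d} \<times> {1..d}" for X
    using that finite_subset by blast
  have finP: "finite P" by (rule fin) (auto simp: P_def)
  have finQ: "finite Q" by (rule fin) (auto simp: Q_def discP_def)
  have R1: "discR d \<pi> \<sigma> = P \<union> sw ` P"
  proof
    show "discR d \<pi> \<sigma> \<subseteq> P \<union> sw ` P"
    proof
      fix x assume "x \<in> discR d \<pi> \<sigma>"
      then obtain a b where x: "x = (a,b)" "a\<in>{1..d}" "b\<in>{1..d}" "a \<noteq> b"
        "(\<pi> a < \<pi> b) \<noteq> (\<sigma> a < \<sigma> b)" unfolding discR_def by auto
      show "x \<in> P \<union> sw ` P"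
      proof (cases "a < b")
        case True then show ?thesis using x by (auto simp: P_def)
      next
        case False
        have "\<pi> a \<noteq> \<pi> b" "\<sigma> a \<noteq> \<sigma> b" using x(4) ip isg by (auto simp: inj_eq)
        then have "(b,a) \<in> P" using x False by (auto simp: P_def)
        moreover have "x = sw (b,a)" using x by (simp add: sw_def)
        ultimately show ?thesis by blast
      qed
    qed
    show "P \<union> sw ` P \<subseteq> discR d \<pi> \<sigma>"
    proof
      fix x assume "x \<in> P \<union> sw ` P"
      then obtain a b where ab: "(a,b) \<in> P" and x: "x = (a,b) \<or> x = (b,a)"
        by (cases x) (auto simp: sw_def)
      have ne: "\<pi> a \<noteq> \<pi> b" "\<sigma> a \<noteq> \<sigma> b" "a \<noteq> b" using ab ip isg by (auto simp: P_def inj_eq)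
      have "(\<pi> b < \<pi> a) \<noteq> (\<sigma> b < \<sigma> a)" using ab ne unfolding P_def by auto
      then show "x \<in> discR d \<pi> \<sigma>" using x ab ne unfolding P_def discR_def by auto
    qed
  qed
  have R2: "discR d \<pi> \<sigma> = Q \<union> sw ` Q"
  proof
    show "discR d \<pi> \<sigma> \<subseteq> Q \<union> sw ` Q"
    proof
      fix x assume "x \<in> discR d \<pi> \<sigma>"
      then obtain a b where x: "x = (a,b)" "a\<in>{1..d}" "b\<in>{1..d}" "a \<noteq> b"
        "(\<pi> a < \<pi> b) \<noteq> (\<sigma> a < \<sigma> b)" unfolding discR_def by auto
      have ne1: "\<pi> a \<noteq> \<pi> b" and ne2: "\<sigma> a \<noteq> \<sigma> b" using x(4) ip isg by (auto simp: inj_eq)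
      show "x \<in> Q \<union> sw ` Q"
      proof (cases "\<sigma> a < \<sigma> b")
        case True then show ?thesis using x ne1 by (auto simp: Q_def discP_def)
      next
        case False
        then have "(b,a) \<in> Q" using x ne1 ne2 by (auto simp: Q_def discP_def)
        moreover have "x = sw (b,a)" using x by (simp add: sw_def)
        ultimately show ?thesis by blast
      qed
    qed
    show "Q \<union> sw ` Q \<subseteq> discR d \<pi> \<sigma>"
    proof
      fix x assume "x \<in> Q \<union> sw ` Q"
      then obtain a b where ab: "(a,b) \<in> Q" and x: "x = (a,b) \<or> x = (b,a)"
        by (cases x) (auto simp: sw_def)
      have ne: "a \<noteq> b" using ab by (auto simp: Q_def discP_def)
      show "x \<in> discR d \<pi> \<sigma>" using x ab ne unfolding Q_def discP_def discR_def by auto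
    qed
  qed
  have d1: "P \<inter> sw ` P = {}" by (auto simp: P_def sw_def)
  have d2: "Q \<inter> sw ` Q = {}" by (auto simp: Q_def discP_def sw_def)
  have c1: "card (discR d \<pi> \<sigma>) = card P + card P"
    unfolding R1 using card_Un_disjoint[OF finP finite_imageI[OF finP] d1] card_image[OF swi] by simp
  have c2: "card (discR d \<pi> \<sigma>) = card Q + card Q"
    unfolding R2 using card_Un_disjoint[OF finQ finite_imageI[OF finQ] d2] card_image[OF swi] by simp
  have kt: "kendall_tau d \<pi> \<sigma> = card P" unfolding kendall_tau_def P_def by simp
  show "kendall_tau d \<pi> \<sigma> = card (discP d \<pi> \<sigma>)" using c1 c2 kt Q_def by simp
  show "card (discR d \<pi> \<sigma>) = 2 * kendall_tau d \<pi> \<sigma>" using c1 kt by simp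
qed

definition Fn :: "nat \<Rightarrow> (nat\<Rightarrow>nat) \<Rightarrow> (nat\<Rightarrow>nat) \<Rightarrow> nat" where
  "Fn d \<pi> \<sigma> = (\<Sum>x\<in>{1..d}. max (\<pi> x) (\<sigma> x) - min (\<pi> x) (\<sigma> x))"

lemma K_le_F:
  assumes p: "\<pi> permutes {1..d}" and s: "\<sigma> permutes {1..d}"
  shows "card (discP d \<pi> \<sigma>) \<le> Fn d \<pi> \<sigma>"
proof -
  have ip: "inj \<pi>" and isg: "inj \<sigma>" using permutes_inj p s by auto
  define T where "T = Sigma {1..d} (\<lambda>x. {min (\<pi> x) (\<sigma> x) + 1 .. max (\<pi> x) (\<sigma> x)})"
  define h where "h = (\<lambda>(a::nat,b::nat). if \<sigma> a < \<pi> b then (a, \<pi> b) else (b, \<sigma> a + 1))"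
  have cT: "card T = Fn d \<pi> \<sigma>"
    unfolding T_def Fn_def by (simp add: card_SigmaI)
  have finT: "finite T" unfolding T_def by simp
  have hT: "h ` discP d \<pi> \<sigma> \<subseteq> T"
    proof
    fix y assume "y \<in> h ` discP d \<pi> \<sigma>"
    then obtain a b where ab: "a\<in>{1..d}" "b\<in>{1..d}" "\<sigma> a < \<sigma> b" "\<pi> b < \<pi> a" and y: "y = h (a,b)"
      unfolding discP_def by auto
    show "y \<in> T"
    proof (cases "\<sigma> a < \<pi> b")
      case True
      then have "y = (a, \<pi> b)" using y by (simp add: h_def)
      then show ?thesis using True ab unfolding T_def by auto
    next
      case False
      then have "y = (b, \<sigma> a + 1)" using y by (simp add: h_def)
      then show ?thesis using False ab unfolding T_def by auto
    qed
  qed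
  have inj: "inj_on h (discP d \<pi> \<sigma>)"
  proof (rule inj_onI)
    fix x y assume x: "x \<in> discP d \<pi> \<sigma>" and y: "y \<in> discP d \<pi> \<sigma>" and e: "h x = h y"
    obtain a b where ab: "x = (a,b)" "\<sigma> a < \<sigma> b" "\<pi> b < \<pi> a" using x unfolding discP_def by auto
    obtain a' b' where ab': "y = (a',b')" "\<sigma> a' < \<sigma> b'" "\<pi> b' < \<pi> a'" using y unfolding discP_def by auto
    show "x = y"
    proof (cases "\<sigma> a < \<pi> b")
      case True
      show ?thesis
      proof (cases "\<sigma> a' < \<pi> b'")
        case True2: True
        then show ?thesis using True e ab ab' ip by (auto simp: h_def inj_eq)
      next
        case False
        then show ?thesis using True e ab ab' by (auto simp: h_def)
      qed
    next
      case False
      show ?thesis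
      proof (cases "\<sigma> a' < \<pi> b'")
        case True
        then show ?thesis using False e ab ab' by (auto simp: h_def)
      next
        case False2: False
        then show ?thesis using False e ab ab' isg by (auto simp: h_def inj_eq)
      qed
    qed
  qed
  have "card (discP d \<pi> \<sigma>) = card (h ` discP d \<pi> \<sigma>)" using card_image[OF inj] by simp
  also have "\<dots> \<le> card T" by (rule card_mono[OF finT hT])
  finally show ?thesis using cT by simp
qed

lemma disc_count:
  assumes p: "\<pi> permutes {1..d}" and s: "\<sigma> permutes {1..d}" and a: "a \<in> {1..d}"
    and le: "\<sigma> a \<le> \<pi> a"
  shows "\<pi> a - \<sigma> a \<le> card {b\<in>{1..d}. a \<noteq> b \<and> ((\<pi> a < \<pi> b) \<noteq> (\<sigma> a < \<sigma> b))}"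
proof -
  have ip: "inj \<pi>" and isg: "inj \<sigma>" using permutes_inj p s by auto
  let ?A = "{b\<in>{1..d}. \<pi> b < \<pi> a}"
  let ?B = "{b\<in>{1..d}. \<sigma> b < \<sigma> a}"
  have "\<pi> a - \<sigma> a = card ?A - card ?B"
    using card_below[OF p a] card_below[OF s a] rank_range[OF s a] le by simp
  also have "\<dots> \<le> card (?A - ?B)" by (rule diff_card_le_card_Diff) simp
  also have "\<dots> \<le> card {b\<in>{1..d}. a \<noteq> b \<and> ((\<pi> a < \<pi> b) \<noteq> (\<sigma> a < \<sigma> b))}"
  proof (rule card_mono)
    show "?A - ?B \<subseteq> {b\<in>{1..d}. a \<noteq> b \<and> ((\<pi> a < \<pi> b) \<noteq> (\<sigma> a < \<sigma> b))}"
    proof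
      fix b assume b: "b \<in> ?A - ?B"
      then have "a \<noteq> b" by auto
      then have "\<sigma> a \<noteq> \<sigma> b" using isg by (auto simp: inj_eq)
      then show "b \<in> {b\<in>{1..d}. a \<noteq> b \<and> ((\<pi> a < \<pi> b) \<noteq> (\<sigma> a < \<sigma> b))}"
        using b \<open>a \<noteq> b\<close> by auto
    qed
  qed simp
  finally show ?thesis .
qed

lemma F_le_2K:
  assumes p: "\<pi> permutes {1..d}" and s: "\<sigma> permutes {1..d}"
  shows "Fn d \<pi> \<sigma> \<le> 2 * kendall_tau d \<pi> \<sigma>"
proof -
  have R: "discR d \<pi> \<sigma> = Sigma {1..d} (\<lambda>a. {b\<in>{1..d}. a \<noteq> b \<and> ((\<pi> a < \<pi> b) \<noteq> (\<sigma> a < \<sigma> b))})"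
    unfolding discR_def by auto
  have "Fn d \<pi> \<sigma> \<le> (\<Sum>a\<in>{1..d}. card {b\<in>{1..d}. a \<noteq> b \<and> ((\<pi> a < \<pi> b) \<noteq> (\<sigma> a < \<sigma> b))})"
    unfolding Fn_def
  proof (rule sum_mono)
    fix a assume a: "a \<in> {1..d}"
    show "max (\<pi> a) (\<sigma> a) - min (\<pi> a) (\<sigma> a)
          \<le> card {b\<in>{1..d}. a \<noteq> b \<and> ((\<pi> a < \<pi> b) \<noteq> (\<sigma> a < \<sigma> b))}"
    proof (cases "\<sigma> a \<le> \<pi> a")
      case True
      then show ?thesis using disc_count[OF p s a True] by simp
    next
      case False
      then have "\<pi> a \<le> \<sigma> a" by simp
      from disc_count[OF s p a this]
      have "\<sigma> a - \<pi> a \<le> card {b\<in>{1..d}. a \<noteq> b \<and> ((\<sigma> a < \<sigma> b) \<noteq> (\<pi> a < \<pi> b))}" .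
      moreover have "{b\<in>{1..d}. a \<noteq> b \<and> ((\<sigma> a < \<sigma> b) \<noteq> (\<pi> a < \<pi> b))}
          = {b\<in>{1..d}. a \<noteq> b \<and> ((\<pi> a < \<pi> b) \<noteq> (\<sigma> a < \<sigma> b))}" by blast
      ultimately show ?thesis using False by simp
    qed
  qed
  also have "\<dots> = card (discR d \<pi> \<sigma>)" unfolding R by (simp add: card_SigmaI)
  also have "\<dots> = 2 * kendall_tau d \<pi> \<sigma>" using kt_eq(2)[OF p s] .
  finally show ?thesis .
qed

lemma cost_F:
  assumes p: "\<pi> permutes {1..d}" and s: "\<sigma> permutes {1..d}"
  shows "2 * (\<Sum>i\<in>{1..d}. (int (\<pi> i) - int (\<sigma> i)) * (if \<sigma> i < \<pi> i then 1 else 0))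
         = int (Fn d \<pi> \<sigma>)"
proof -
  have s0: "(\<Sum>i\<in>{1..d}. int (\<pi> i) - int (\<sigma> i)) = 0"
  proof -
    have "(\<Sum>i\<in>{1..d}. int (\<pi> i)) = (\<Sum>i\<in>{1..d}. int i)" using sum.permute[OF p, of int] by simp
    moreover have "(\<Sum>i\<in>{1..d}. int (\<sigma> i)) = (\<Sum>i\<in>{1..d}. int i)" using sum.permute[OF s, of int] by simp
    ultimately show ?thesis by (simp add: sum_subtractf)
  qed
  have "int (Fn d \<pi> \<sigma>) = (\<Sum>i\<in>{1..d}. 2 * ((int (\<pi> i) - int (\<sigma> i)) * (if \<sigma> i < \<pi> i then 1 else 0)) - (int (\<pi> i) - int (\<sigma> i)))"
    unfolding Fn_def of_nat_sum by (rule sum.cong) auto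
  also have "\<dots> = 2 * (\<Sum>i\<in>{1..d}. (int (\<pi> i) - int (\<sigma> i)) * (if \<sigma> i < \<pi> i then 1 else 0)) - (\<Sum>i\<in>{1..d}. int (\<pi> i) - int (\<sigma> i))"
    by (simp add: sum_subtractf sum_distrib_left)
  finally show ?thesis using s0 by simp
qed

lemma cost_mono:
  assumes "finite B" "A \<subseteq> B"
  shows "cost S A f \<le> cost S B f"
  unfolding cost_def
proof -
  have "(\<Sum>\<pi>\<in>S. \<Sum>i\<in>A. (int (\<pi> i) - int (f i)) * (if f i < \<pi> i then 1 else 0))
     \<le> (\<Sum>\<pi>\<in>S. \<Sum>i\<in>B. (int (\<pi> i) - int (f i)) * (if f i < \<pi> i then 1 else 0))"
    by (rule sum_mono, rule sum_mono2[OF assms]) auto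
  then show "2 * (\<Sum>\<pi>\<in>S. \<Sum>i\<in>A. (int (\<pi> i) - int (f i)) * (if f i < \<pi> i then 1 else 0))
     \<le> 2 * (\<Sum>\<pi>\<in>S. \<Sum>i\<in>B. (int (\<pi> i) - int (f i)) * (if f i < \<pi> i then 1 else 0))" by simp
qed

lemma cost_split:
  assumes "finite A" "finite B" "A \<inter> B = {}"
  shows "cost S (A \<union> B) f = cost S A f + cost S B f"
  unfolding cost_def using assms by (simp add: sum.union_disjoint sum.distrib distrib_left)

lemma cost_cong:
  assumes "\<forall>i\<in>A. f i = g i"
  shows "cost S A f = cost S A g"
  unfolding cost_def using assms by simp

lemma cost_pw:
  assumes "\<forall>i\<in>A. g i \<le> f i"
  shows "cost S A f \<le> cost S A g"
proof -
  have "(\<Sum>\<pi>\<in>S. \<Sum>i\<in>A. (int (\<pi> i) - int (f i)) * (if f i < \<pi> i then 1 else 0))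
     \<le> (\<Sum>\<pi>\<in>S. \<Sum>i\<in>A. (int (\<pi> i) - int (g i)) * (if g i < \<pi> i then 1 else 0))"
    by (rule sum_mono, rule sum_mono) (use assms in auto)
  then show ?thesis unfolding cost_def by simp
qed

lemma cost_full:
  assumes "S \<subseteq> rankings d" "\<sigma> permutes {1..d}"
  shows "cost S {1..d} \<sigma> = int (\<Sum>\<pi>\<in>S. Fn d \<pi> \<sigma>)"
proof -
  have "cost S {1..d} \<sigma> = (\<Sum>\<pi>\<in>S. 2 * (\<Sum>i\<in>{1..d}. (int (\<pi> i) - int (\<sigma> i)) * (if \<sigma> i < \<pi> i then 1 else 0)))"
    unfolding cost_def by (simp add: sum_distrib_left)
  also have "\<dots> = (\<Sum>\<pi>\<in>S. int (Fn d \<pi> \<sigma>))"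
    by (rule sum.cong) (use assms cost_F in \<open>auto simp: rankings_def\<close>)
  finally show ?thesis by simp
qed


theorem mainTheorem8:
  fixes d g k :: nat and S :: "(nat \<Rightarrow> nat) set" and G :: "nat \<Rightarrow> nat set"
    and \<alpha> \<beta> :: "nat \<Rightarrow> real" and D :: "nat set" and \<tau> \<sigma> :: "nat \<Rightarrow> nat"
  assumes S_sub: "S \<subseteq> rankings d" and S_ne: "S \<noteq> {}"
    and part: "is_partition d g G"
    and alpha: "\<forall>i\<in>{1..g}. 0 \<le> \<alpha> i \<and> \<alpha> i \<le> 1"
    and beta: "\<forall>i\<in>{1..g}. 0 \<le> \<beta> i \<and> \<beta> i \<le> 1"
    and k: "1 \<le> k" "k \<le> d"
    and F_ne: "{\<pi>\<in>rankings d. fair_full g G \<alpha> \<beta> k \<pi>} \<noteq> {}"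
    and tau: "is_topk d k D \<tau>" "fair_topk g G \<alpha> \<beta> k D \<tau>"
    and tau_min: "\<forall>D' \<tau>'. is_topk d k D' \<tau>' \<and> fair_topk g G \<alpha> \<beta> k D' \<tau>' \<longrightarrow>
                     cost S D \<tau> \<le> cost S D' \<tau>'"
    and sigma: "\<sigma> \<in> rankings d" "\<forall>a\<in>D. \<sigma> a = \<tau> a"
    and sigma_min: "\<forall>\<sigma>'\<in>rankings d. (\<forall>a\<in>D. \<sigma>' a = \<tau> a) \<longrightarrow>
                     cost S {1..d} \<sigma> \<le> cost S {1..d} \<sigma>'"
  shows "\<sigma> \<in> {\<pi>\<in>rankings d. fair_full g G \<alpha> \<beta> k \<pi>} \<and>
         (\<Sum>\<pi>\<in>S. kendall_tau d \<pi> \<sigma>) \<le>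
           4 * Min ((\<lambda>\<sigma>'. \<Sum>\<pi>\<in>S. kendall_tau d \<pi> \<sigma>') ` {\<pi>\<in>rankings d. fair_full g G \<alpha> \<beta> k \<pi>})"
proof -
  define F where "F = {\<pi>\<in>rankings d. fair_full g G \<alpha> \<beta> k \<pi>}"
  have finR: "finite (rankings d)" unfolding rankings_def by (simp add: finite_permutations)
  have finF: "finite F" unfolding F_def using finR by simp
  have Gsub: "G i \<subseteq> {1..d}" if "i \<in> {1..g}" for i
    using part that unfolding is_partition_def by blast
  have sp: "\<sigma> permutes {1..d}" using sigma(1) unfolding rankings_def by simp
  have Dsub: "D \<subseteq> {1..d}" and tbij: "bij_betw \<tau> D {1..k}" using tau(1) unfolding is_topk_def by auto
  have finD: "finite D" using Dsub finite_subset by blast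
  have cardD: "card D = k" using bij_betw_same_card[OF tbij] by simp
  have timg: "\<tau> ` D = {1..k}" using bij_betw_imp_surj_on[OF tbij] .
  have tinj: "inj_on \<tau> D" using bij_betw_imp_inj_on[OF tbij] .
  have topD: "(\<sigma> a \<le> k) = (a \<in> D)" if a: "a \<in> {1..d}" for a
  proof
    assume "\<sigma> a \<le> k"
    moreover have "\<sigma> a \<ge> 1" using rank_range[OF sp a] by simp
    ultimately have "\<sigma> a \<in> \<tau> ` D" using timg by auto
    then obtain b where b: "b \<in> D" "\<sigma> a = \<tau> b" by auto
    then have "\<sigma> a = \<sigma> b" using sigma(2) by simp
    then have "a = b" using permutes_inj[OF sp] by (simp add: inj_eq)
    then show "a \<in> D" using b by simp
  next
    assume aD: "a \<in> D"
    then have "\<tau> a \<in> {1..k}" using timg by blast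
    then show "\<sigma> a \<le> k" using sigma(2) aD by simp
  qed
  have seteq: "{a\<in>G i. \<sigma> a \<le> k} = {a\<in>G i \<inter> D. \<tau> a \<le> k}" if i: "i \<in> {1..g}" for i
  proof
    show "{a\<in>G i. \<sigma> a \<le> k} \<subseteq> {a\<in>G i \<inter> D. \<tau> a \<le> k}"
    proof
      fix x assume x: "x \<in> {a\<in>G i. \<sigma> a \<le> k}"
      then have xd: "x \<in> {1..d}" using Gsub[OF i] by auto
      then have "x \<in> D" using topD[OF xd] x by simp
      then show "x \<in> {a\<in>G i \<inter> D. \<tau> a \<le> k}" using x sigma(2) by auto
    qed
    show "{a\<in>G i \<inter> D. \<tau> a \<le> k} \<subseteq> {a\<in>G i. \<sigma> a \<le> k}"
      using sigma(2) by auto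
  qed
  have fairS: "fair_full g G \<alpha> \<beta> k \<sigma>"
    using tau(2) seteq unfolding fair_full_def fair_topk_def Let_def by simp
  have sF: "\<sigma> \<in> F" unfolding F_def using sigma(1) fairS by simp
  define E where "E = {1..d} - D"
  have finE: "finite E" unfolding E_def by simp
  have dE: "D \<inter> E = {}" and uE: "D \<union> E = {1..d}" unfolding E_def using Dsub by auto
  have cardE: "card E = d - k" unfolding E_def using Dsub cardD finD by (simp add: card_Diff_subset)
  have key: "cost S {1..d} \<sigma> \<le> 2 * cost S {1..d} s" if sF': "s \<in> F" for s
  proof -
    have ps: "s permutes {1..d}" using sF' unfolding F_def rankings_def by simp
    have sfair: "fair_full g G \<alpha> \<beta> k s" using sF' unfolding F_def by simp
    define Ds where "Ds = {a\<in>{1..d}. s a \<le> k}"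
    have "s ` Ds = {1..k}"
    proof
      show "s ` Ds \<subseteq> {1..k}" using rank_range[OF ps] by (force simp: Ds_def)
      show "{1..k} \<subseteq> s ` Ds"
      proof
        fix v assume v: "v \<in> {1..k}"
        then have "v \<in> {1..d}" using k by auto
        then obtain b where "b \<in> {1..d}" "s b = v" using permutes_image[OF ps] by (metis imageE)
        then show "v \<in> s ` Ds" using v by (auto simp: Ds_def)
      qed
    qed
    moreover have "inj_on s Ds" by (rule inj_on_subset[OF permutes_inj[OF ps]]) simp
    ultimately have "bij_betw s Ds {1..k}" unfolding bij_betw_def by simp
    then have tk: "is_topk d k Ds s" unfolding is_topk_def Ds_def by auto
    have "{a\<in>G i \<inter> Ds. s a \<le> k} = {a\<in>G i. s a \<le> k}" if i: "i \<in> {1..g}" for i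
      using Gsub[OF i] by (auto simp: Ds_def)
    then have tf: "fair_topk g G \<alpha> \<beta> k Ds s"
      using sfair unfolding fair_full_def fair_topk_def Let_def by simp
    have c1: "cost S D \<tau> \<le> cost S {1..d} s"
    proof -
      have "cost S D \<tau> \<le> cost S Ds s" using tau_min tk tf by blast
      also have "\<dots> \<le> cost S {1..d} s" by (rule cost_mono) (auto simp: Ds_def)
      finally show ?thesis .
    qed
    define r where "r = (\<lambda>x. if x \<in> D then \<tau> x else if x \<in> {1..d} then k + card {y\<in>E. s y \<le> s x} else x)"
    have rE: "r x \<in> {k+1..d} \<and> s x \<le> r x" if x: "x \<in> E" for x
    proof -
      have xd: "x \<in> {1..d}" "x \<notin> D" using x unfolding E_def by auto
      have rx: "r x = k + card {y\<in>E. s y \<le> s x}" using xd unfolding r_def by simp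
      have "1 \<le> card {y\<in>E. s y \<le> s x}"
        using x finE by (metis (no_types, lifting) One_nat_def Suc_leI card_gt_0_iff empty_iff finite_subset mem_Collect_eq subsetI order_refl)
      moreover have "card {y\<in>E. s y \<le> s x} \<le> card E" using finE by (intro card_mono) auto
      moreover have "s x \<le> card {y\<in>E. s y \<le> s x} + k"
      proof -
        have "s x = card {b\<in>{1..d}. s b \<le> s x}" using card_atmost[OF ps xd(1)] by simp
        also have "\<dots> \<le> card ({y\<in>E. s y \<le> s x} \<union> D)"
          by (rule card_mono) (use finD in \<open>auto simp: E_def\<close>)
        also have "\<dots> \<le> card {y\<in>E. s y \<le> s x} + card D" by (rule card_Un_le)
        finally show ?thesis using cardD by simp
      qed
      ultimately show ?thesis using rx cardE k by auto
    qed
    have rD: "r x = \<tau> x" if "x \<in> D" for x using that unfolding r_def by simp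
    have rout: "r x = x" if "x \<notin> {1..d}" for x using that Dsub unfolding r_def by auto
    have rinj: "inj_on r {1..d}"
    proof (rule inj_onI)
      fix x y assume x: "x \<in> {1..d}" and y: "y \<in> {1..d}" and e: "r x = r y"
      show "x = y"
      proof (cases "x \<in> D")
        case xD: True
        show ?thesis
        proof (cases "y \<in> D")
          case True
          then show ?thesis using xD e rD tinj by (metis inj_onD)
        next
          case False
          then have "y \<in> E" using y unfolding E_def by simp
          then have "r y \<ge> k+1" using rE by auto
          moreover have "r x \<le> k" using rD[OF xD] timg xD by auto
          ultimately show ?thesis using e by simp
        qed
      next
        case xD: False
        then have xE: "x \<in> E" using x unfolding E_def by simp
        show ?thesis
        proof (cases "y \<in> D")
          case True
          have "r x \<ge> k+1" using rE xE by auto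
          moreover have "r y \<le> k" using rD[OF True] timg True by auto
          ultimately show ?thesis using e by simp
        next
          case False
          then have yE: "y \<in> E" using y unfolding E_def by simp
          have ce: "card {z\<in>E. s z \<le> s x} = card {z\<in>E. s z \<le> s y}"
            using e xD False x y unfolding r_def by simp
          show ?thesis
          proof (rule ccontr)
            assume ne: "x \<noteq> y"
            then have "s x \<noteq> s y" using permutes_inj[OF ps] by (auto simp: inj_eq)
            then consider "s x < s y" | "s y < s x" by linarith
            then show False
            proof cases
              case 1
              have sub: "{z\<in>E. s z \<le> s x} \<subseteq> {z\<in>E. s z \<le> s y}" using 1 by auto
              have "y \<in> {z\<in>E. s z \<le> s y}" "y \<notin> {z\<in>E. s z \<le> s x}" using 1 yE by auto
              then have "{z\<in>E. s z \<le> s x} \<subset> {z\<in>E. s z \<le> s y}" using sub by blast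
              then have "card {z\<in>E. s z \<le> s x} < card {z\<in>E. s z \<le> s y}"
                using finE by (intro psubset_card_mono) auto
              then show False using ce by simp
            next
              case 2
              have sub: "{z\<in>E. s z \<le> s y} \<subseteq> {z\<in>E. s z \<le> s x}" using 2 by auto
              have "x \<in> {z\<in>E. s z \<le> s x}" "x \<notin> {z\<in>E. s z \<le> s y}" using 2 xE by auto
              then have "{z\<in>E. s z \<le> s y} \<subset> {z\<in>E. s z \<le> s x}" using sub by blast
              then have "card {z\<in>E. s z \<le> s y} < card {z\<in>E. s z \<le> s x}"
                using finE by (intro psubset_card_mono) auto
              then show False using ce by simp
            qed
          qed
        qed
      qed
    qed
    have rimg: "r ` {1..d} \<subseteq> {1..d}"
    proof
      fix v assume "v \<in> r ` {1..d}"
      then obtain x where x: "x \<in> {1..d}" "v = r x" by auto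
      show "v \<in> {1..d}"
      proof (cases "x \<in> D")
        case True
        then have "r x \<in> {1..k}" using rD timg by auto
        then show ?thesis using x k by auto
      next
        case False
        then have "x \<in> E" using x unfolding E_def by simp
        then have "r x \<in> {k+1..d}" using rE by blast
        then show ?thesis using x k by auto
      qed
    qed
    have "r ` {1..d} = {1..d}" by (rule endo_inj_surj[OF _ rimg rinj]) simp
    then have "bij_betw r {1..d} {1..d}" using rinj unfolding bij_betw_def by simp
    then have rp: "r permutes {1..d}" by (rule bij_imp_permutes) (use rout in simp)
    then have "r \<in> rankings d" unfolding rankings_def by simp
    moreover have "\<forall>a\<in>D. r a = \<tau> a" using rD by simp
    ultimately have "cost S {1..d} \<sigma> \<le> cost S {1..d} r" using sigma_min by blast
    also have "\<dots> = cost S D r + cost S E r" using cost_split[OF finD finE dE] uE by simp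
    also have "cost S D r = cost S D \<tau>" by (rule cost_cong) (simp add: rD)
    also have "cost S E r \<le> cost S E s" by (rule cost_pw) (use rE in simp)
    also have "cost S E s \<le> cost S {1..d} s" by (rule cost_mono) (auto simp: E_def)
    finally show ?thesis using c1 by simp
  qed
  have main: "(\<Sum>\<pi>\<in>S. kendall_tau d \<pi> \<sigma>) \<le> 4 * (\<Sum>\<pi>\<in>S. kendall_tau d \<pi> s)" if sF': "s \<in> F" for s
  proof -
    have ps: "s permutes {1..d}" using sF' unfolding F_def rankings_def by simp
    have Sp: "\<pi> permutes {1..d}" if "\<pi> \<in> S" for \<pi> using that S_sub unfolding rankings_def by auto
    have "(\<Sum>\<pi>\<in>S. kendall_tau d \<pi> \<sigma>) \<le> (\<Sum>\<pi>\<in>S. Fn d \<pi> \<sigma>)"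
    proof (rule sum_mono)
      fix \<pi> assume "\<pi> \<in> S"
      then have pp: "\<pi> permutes {1..d}" by (rule Sp)
      show "kendall_tau d \<pi> \<sigma> \<le> Fn d \<pi> \<sigma>" using kt_eq(1)[OF pp sp] K_le_F[OF pp sp] by simp
    qed
    moreover have "(\<Sum>\<pi>\<in>S. Fn d \<pi> \<sigma>) \<le> 2 * (\<Sum>\<pi>\<in>S. Fn d \<pi> s)"
    proof -
      have "int (\<Sum>\<pi>\<in>S. Fn d \<pi> \<sigma>) \<le> 2 * int (\<Sum>\<pi>\<in>S. Fn d \<pi> s)"
        using key[OF sF'] cost_full[OF S_sub sp] cost_full[OF S_sub ps] by linarith
      then have "int (\<Sum>\<pi>\<in>S. Fn d \<pi> \<sigma>) \<le> int (2 * (\<Sum>\<pi>\<in>S. Fn d \<pi> s))" by simp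
      then show ?thesis using of_nat_le_iff by blast
    qed
    moreover have "(\<Sum>\<pi>\<in>S. Fn d \<pi> s) \<le> (\<Sum>\<pi>\<in>S. 2 * kendall_tau d \<pi> s)"
    proof (rule sum_mono)
      fix \<pi> assume "\<pi> \<in> S"
      then have pp: "\<pi> permutes {1..d}" by (rule Sp)
      show "Fn d \<pi> s \<le> 2 * kendall_tau d \<pi> s" using F_le_2K[OF pp ps] .
    qed
    ultimately show ?thesis by (simp add: sum_distrib_left[symmetric])
  qed
  have "Min ((\<lambda>\<sigma>'. \<Sum>\<pi>\<in>S. kendall_tau d \<pi> \<sigma>') ` F) \<in> (\<lambda>\<sigma>'. \<Sum>\<pi>\<in>S. kendall_tau d \<pi> \<sigma>') ` F"
    by (rule Min_in) (use finF F_ne F_def in auto)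
  then obtain s where s: "s \<in> F" "Min ((\<lambda>\<sigma>'. \<Sum>\<pi>\<in>S. kendall_tau d \<pi> \<sigma>') ` F) = (\<Sum>\<pi>\<in>S. kendall_tau d \<pi> s)"
    by auto
  show ?thesis using sF main[OF s(1)] s(2) unfolding F_def by simp
qed

end
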